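(* Consider the objective $$\Phi(w,u)=\frac1n\sum_{i=1}^n\Big[-L\big(y_i,f(w,u)(x^i)\big)+\sum_{r=1}^K f_r(w,u)(x^i)\Big]+\epsilon\Big(\sum_{r,l}w_{r,l}+\sum_{l,m}u_{lm}\Big),\quad\epsilon>0,$$ for a family of functions $f_r(w,u)(x)$, $r\in[K]$, that are twice continuously differentiable in $(w,u)$ on a neighbourhood of $B_{++}$ and whose first and second partial derivatives in the entries of $(w,u)$ are nonnegative there. Suppose there exist constants $C_w,C_u,M_{w,w},M_{w,u},M_{u,w},M_{u,u}>0$ such that for every $x\in\{x^1,\dots,x^n\}$, every $(w,u)\in B_{++}$, all $r,s\in[K]$, $t,b'\in[n_1]$ (indices for $w$) and $a\in[n_1]$, $b\in[d]$, $a'\in[n_1]$, $b''\in[d]$ (indices for $u$): $$\sum_{t}w_{s,t}\frac{\partial f_r(x)}{\partial w_{s,t}}\le C_w,\qquad \sum_{a,b}u_{ab}\frac{\partial f_r(x)}{\partial u_{ab}}\le C_u,$$ $$\sum_t w_{s,t}\frac{\partial^2 f_r(x)}{\partial w_{s,t}\partial w_{q,b'}}\le M_{w,w}\frac{\partial f_r(x)}{\partial w_{q,b'}},\qquad \sum_{a,b}u_{ab}\frac{\partial^2 f_r(x)}{\partial u_{ab}\partial w_{q,b'}}\le M_{w,u}\frac{\partial f_r(x)}{\partial w_{q,b'}},$$ $$\sum_t w_{s,t}\frac{\partial^2 f_r(x)}{\partial w_{s,t}\partial u_{a'b''}}\le M_{u,w}\frac{\partial f_r(x)}{\partial u_{a'b''}},\qquad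 \sum_{a,b}u_{ab}\frac{\partial^2 f_r(x)}{\partial u_{ab}\partial u_{a'b''}}\le M_{u,u}\frac{\partial f_r(x)}{\partial u_{a'b''}}$$ (for all $q\in[K]$). Then $F=G^\Phi$ is well defined on $B_{++}$ and $F$ and the matrix $$A=2\,\mathrm{diag}(p_w'-1,\dots,p_w'-1,p_u'-1)\begin{pmatrix}(2C_w+M_{w,w})\mathbf{1}\mathbf{1}^T & (2C_u+M_{w,u})\mathbf{1}\\ (2C_w+M_{u,w})\mathbf{1}^T & 2C_u+M_{u,u}\end{pmatrix}\in\mathbb{R}^{(K+1)\times(K+1)}$$ (with $\mathbf{1}\in\mathbb{R}^K$ the all-ones vector) satisfy, for all $i,k\in[K]$, $j,a\in[n_1]$, $b\in[d]$, $(w,u)\in B_{++}$: $$\langle|\nabla_{w_k}F_{w_{i,j}}|,w_k\rangle\le A_{i,k}F_{w_{i,j}},\ \langle|\nabla_u F_{w_{i,j}}|,u\rangle\le A_{i,K+1}F_{w_{i,j}},\ \langle|\nabla_{w_k}F_{u_{ab}}|,w_k\rangle\le A_{K+1,k}F_{u_{ab}},\ \langle|\nabla_u F_{u_{ab}}|,u\rangle\le A_{K+1,K+1}F_{u_{ab}}.$$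
   Context: Data $(x^i,y_i)\in\mathbb{R}^d_+\times[K]$, $i\in[n]$. $w\in\mathbb{R}^{K\times n_1}$ with rows $w_1,\dots,w_K$, $u\in\mathbb{R}^{n_1\times d}$. Loss $L(y,f(x))=-f_y(x)+\log\sum_{j=1}^K e^{f_j(x)}$. $V_{++}=\mathbb{R}^{K\times n_1}_{++}\times\mathbb{R}^{n_1\times d}_{++}$; given $p_w,p_u\in(1,\infty)$, $\rho_w,\rho_u>0$, $B_{++}=\{(w,u)\in V_{++}:\|u\|_{p_u}\le\rho_u,\ \|w_i\|_{p_w}\le\rho_w\ \forall i\}$ (entrywise norms). For $p\in(1,\infty)$, $p'=p/(p-1)$, $\psi_p(z)=\operatorname{sign}(z)|z|^{p-1}$ componentwise; $$G^{\Phi}(w,u)=\Big(\tfrac{\rho_w\psi_{p_w'}(\nabla_{w_1}\Phi)}{\|\psi_{p_w'}(\nabla_{w_1}\Phi)\|_{p_w}},\dots,\tfrac{\rho_w\psi_{p_w'}(\nabla_{w_K}\Phi)}{\|\psi_{p_w'}(\nabla_{w_K}\Phi)\|_{p_w}},\tfrac{\rho_u\psi_{p_u'}(\nabla_u\Phi)}{\|\psi_{p_u'}(\nabla_u\Phi)\|_{p_u}}\Big)(w,u),$$ whose components are denoted $F_{w_{i,j}}$, $F_{u_{ab}}$. $|\cdot|$ is the entrywise absolute value, $\langle\cdot,\cdot\rangle$ the Frobenius inner product, all quantities evaluated at $(w,u)$. *)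

theory Defs
  imports "HOL-Analysis.Analysis"
begin

text \<open>Parameters (w,u): w is a K x n1 matrix (rows w_1..w_K), u is an n1 x d matrix.
  The index types 'k, 'h, 'd stand for [K], [n1], [d].\<close>
type_synonym ('k,'h,'d) param = "(real^'h^'k) \<times> (real^'d^'h)"

definition pd :: "('a::real_normed_vector \<Rightarrow> real) \<Rightarrow> 'a \<Rightarrow> 'a \<Rightarrow> real" where
  "pd g th v = frechet_derivative g (at th) v"

definition pd2 :: "('a::real_normed_vector \<Rightarrow> real) \<Rightarrow> 'a \<Rightarrow> 'a \<Rightarrow> 'a \<Rightarrow> real" where
  "pd2 g th v1 v2 = pd (\<lambda>eta. pd g eta v1) th v2"

definition dirW :: "'k::finite \<Rightarrow> 'h::finite \<Rightarrow> ('k,'h,'d::finite) param" where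
  "dirW s t = (axis s (axis t 1), 0)"

definition dirU :: "'h::finite \<Rightarrow> 'd::finite \<Rightarrow> ('k::finite,'h,'d) param" where
  "dirU a b = (0, axis a (axis b 1))"

definition C2_on :: "'a::euclidean_space set \<Rightarrow> ('a \<Rightarrow> real) \<Rightarrow> bool" where
  "C2_on S g \<longleftrightarrow>
     (\<forall>th\<in>S. g differentiable (at th)) \<and>
     (\<forall>v\<in>Basis. \<forall>th\<in>S. (\<lambda>eta. pd g eta v) differentiable (at th)) \<and>
     (\<forall>v1\<in>Basis. \<forall>v2\<in>Basis. continuous_on S (\<lambda>th. pd2 g th v1 v2))"

definition CE_loss :: "'k::finite \<Rightarrow> ('k \<Rightarrow> real) \<Rightarrow> real" where
  "CE_loss yk z = - z yk + ln (\<Sum>j\<in>UNIV. exp (z j))"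

definition Phi :: "('k::finite \<Rightarrow> real^'d \<Rightarrow> ('k,'h::finite,'d::finite) param \<Rightarrow> real)
      \<Rightarrow> (nat \<Rightarrow> real^'d) \<Rightarrow> (nat \<Rightarrow> 'k) \<Rightarrow> nat \<Rightarrow> real \<Rightarrow> ('k,'h,'d) param \<Rightarrow> real" where
  "Phi f x y n \<epsilon> th =
     (1 / real n) * (\<Sum>i<n. - CE_loss (y i) (\<lambda>r. f r (x i) th) + (\<Sum>r\<in>UNIV. f r (x i) th))
     + \<epsilon> * ((\<Sum>r\<in>UNIV. \<Sum>l\<in>UNIV. fst th $ r $ l) + (\<Sum>l\<in>UNIV. \<Sum>m\<in>UNIV. snd th $ l $ m))"

definition psi :: "real \<Rightarrow> real \<Rightarrow> real" where
  "psi p z = sgn z * \<bar>z\<bar> powr (p - 1)"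

definition hconj :: "real \<Rightarrow> real" where
  "hconj p = p / (p - 1)"

definition pnorm_row :: "real \<Rightarrow> real^'h::finite \<Rightarrow> real" where
  "pnorm_row p v = (\<Sum>j\<in>UNIV. \<bar>v $ j\<bar> powr p) powr (1 / p)"

definition pnorm_mat :: "real \<Rightarrow> real^'d::finite^'h::finite \<Rightarrow> real" where
  "pnorm_mat p u = (\<Sum>a\<in>UNIV. \<Sum>b\<in>UNIV. \<bar>u $ a $ b\<bar> powr p) powr (1 / p)"

definition Bpp :: "real \<Rightarrow> real \<Rightarrow> real \<Rightarrow> real \<Rightarrow> ('k::finite,'h::finite,'d::finite) param set" where
  "Bpp pw pu \<rho>w \<rho>u = {th. (\<forall>r l. fst th $ r $ l > 0) \<and> (\<forall>a b. snd th $ a $ b > 0) \<and>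
      pnorm_mat pu (snd th) \<le> \<rho>u \<and> (\<forall>i. pnorm_row pw (fst th $ i) \<le> \<rho>w)}"

definition denomW :: "real \<Rightarrow> (('k::finite,'h::finite,'d::finite) param \<Rightarrow> real) \<Rightarrow> 'k \<Rightarrow> ('k,'h,'d) param \<Rightarrow> real" where
  "denomW pw \<Phi> i th = pnorm_row pw (\<chi> t. psi (hconj pw) (pd \<Phi> th (dirW i t)))"

definition denomU :: "real \<Rightarrow> (('k::finite,'h::finite,'d::finite) param \<Rightarrow> real) \<Rightarrow> ('k,'h,'d) param \<Rightarrow> real" where
  "denomU pu \<Phi> th = pnorm_mat pu (\<chi> a b. psi (hconj pu) (pd \<Phi> th (dirU a b)))"

definition GW :: "real \<Rightarrow> real \<Rightarrow> (('k::finite,'h::finite,'d::finite) param \<Rightarrow> real) \<Rightarrow> 'k \<Rightarrow> 'h \<Rightarrow> ('k,'h,'d) param \<Rightarrow> real" where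
  "GW pw \<rho>w \<Phi> i j th = \<rho>w * psi (hconj pw) (pd \<Phi> th (dirW i j)) / denomW pw \<Phi> i th"

definition GU :: "real \<Rightarrow> real \<Rightarrow> (('k::finite,'h::finite,'d::finite) param \<Rightarrow> real) \<Rightarrow> 'h \<Rightarrow> 'd \<Rightarrow> ('k,'h,'d) param \<Rightarrow> real" where
  "GU pu \<rho>u \<Phi> a b th = \<rho>u * psi (hconj pu) (pd \<Phi> th (dirU a b)) / denomU pu \<Phi> th"

text \<open>The matrix A in R^{(K+1)x(K+1)}, rows/columns indexed by 'k option
  (Some i = index i in [K], None = index K+1):
  A = 2 diag(pw'-1,...,pw'-1,pu'-1) * Blk.\<close>
definition Amat :: "real \<Rightarrow> real \<Rightarrow> real \<Rightarrow> real \<Rightarrow> real \<Rightarrow> real \<Rightarrow> real \<Rightarrow> real \<Rightarrow>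
    'k option \<Rightarrow> 'k option \<Rightarrow> real" where
  "Amat pw pu Cw Cu Mww Mwu Muw Muu i k =
     2 * (case i of Some _ \<Rightarrow> hconj pw - 1 | None \<Rightarrow> hconj pu - 1) *
     (case (i, k) of
        (Some _, Some _) \<Rightarrow> 2 * Cw + Mww
      | (Some _, None) \<Rightarrow> 2 * Cu + Mwu
      | (None, Some _) \<Rightarrow> 2 * Cw + Muw
      | (None, None) \<Rightarrow> 2 * Cu + Muu)"

end

theory Submission
  imports Defs
begin


lemma pd_eq: "(g has_derivative g') (at th) \<Longrightarrow> pd g th v = g' v"
  unfolding pd_def using frechet_derivative_at by metis

lemma dirW_Basis: "dirW s t \<in> Basis"
  unfolding dirW_def by (auto simp: Basis_prod_def Basis_vec_def)

lemma dirU_Basis: "dirU a b \<in> Basis"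
  unfolding dirU_def Basis_prod_def by (rule UnI2) (auto simp: Basis_vec_def)

lemma line_deriv:
  assumes "h differentiable (at (p + s *\<^sub>R v))"
  shows "((\<lambda>s. h (p + s *\<^sub>R v)) has_real_derivative pd h (p + s *\<^sub>R v) v) (at s)"
proof -
  let ?D = "frechet_derivative h (at (p + s *\<^sub>R v))"
  have hd: "(h has_derivative ?D) (at (p + s *\<^sub>R v))" using assms frechet_derivative_works by blast
  have ld: "((\<lambda>s. p + s *\<^sub>R v) has_derivative (\<lambda>s. s *\<^sub>R v)) (at s)"
    by (auto intro!: derivative_eq_intros)
  have "((\<lambda>s. h (p + s *\<^sub>R v)) has_derivative (\<lambda>s. ?D (s *\<^sub>R v))) (at s)"
    using has_derivative_compose[OF ld hd] by (simp add: o_def)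
  moreover have "(\<lambda>s. ?D (s *\<^sub>R v)) = (*) (?D v)"
    using linear_scale[OF has_derivative_linear[OF hd]] by (auto simp: mult.commute)
  ultimately show ?thesis unfolding has_field_derivative_def pd_def by simp
qed

lemma rect_mvt:
  fixes g :: "'a::real_normed_vector \<Rightarrow> real"
  assumes dif: "\<forall>\<eta>\<in>S. g differentiable (at \<eta>)"
    and dif1: "\<forall>\<eta>\<in>S. (\<lambda>\<eta>. pd g \<eta> v1) differentiable (at \<eta>)"
    and st: "s > 0" "t > 0"
    and box: "\<And>\<sigma> \<tau>. 0 \<le> \<sigma> \<Longrightarrow> \<sigma> \<le> s \<Longrightarrow> 0 \<le> \<tau> \<Longrightarrow> \<tau> \<le> t \<Longrightarrow> x + \<sigma> *\<^sub>R v1 + \<tau> *\<^sub>R v2 \<in> S"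
  shows "\<exists>\<sigma> \<tau>. 0 < \<sigma> \<and> \<sigma> < s \<and> 0 < \<tau> \<and> \<tau> < t \<and>
    g (x + s *\<^sub>R v1 + t *\<^sub>R v2) - g (x + s *\<^sub>R v1) - g (x + t *\<^sub>R v2) + g x
      = s * t * pd2 g (x + \<sigma> *\<^sub>R v1 + \<tau> *\<^sub>R v2) v1 v2"
proof -
  define \<phi> where "\<phi> \<sigma> = g ((x + t *\<^sub>R v2) + \<sigma> *\<^sub>R v1) - g (x + \<sigma> *\<^sub>R v1)" for \<sigma>
  have "\<exists>z. 0 < z \<and> z < s \<and> \<phi> s - \<phi> 0 = (s - 0) *
      (pd g ((x + t *\<^sub>R v2) + z *\<^sub>R v1) v1 - pd g (x + z *\<^sub>R v1) v1)"
  proof (rule MVT2[OF st(1)])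
    fix z assume z: "0 \<le> z" "z \<le> s"
    have i1: "(x + t *\<^sub>R v2) + z *\<^sub>R v1 \<in> S" using box[of z t] z st
      by (simp add: algebra_simps)
    have i2: "x + z *\<^sub>R v1 \<in> S" using box[of z 0] z st by simp
    show "DERIV \<phi> z :> pd g ((x + t *\<^sub>R v2) + z *\<^sub>R v1) v1 - pd g (x + z *\<^sub>R v1) v1"
      unfolding \<phi>_def
      by (intro DERIV_diff line_deriv) (use dif i1 i2 in auto)
  qed
  then obtain \<sigma> where \<sigma>: "0 < \<sigma>" "\<sigma> < s" and e1: "\<phi> s - \<phi> 0 = s *
      (pd g ((x + t *\<^sub>R v2) + \<sigma> *\<^sub>R v1) v1 - pd g (x + \<sigma> *\<^sub>R v1) v1)" by auto
  define \<psi> where "\<psi> \<tau> = pd g ((x + \<sigma> *\<^sub>R v1) + \<tau> *\<^sub>R v2) v1" for \<tau>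
  have "\<exists>z. 0 < z \<and> z < t \<and> \<psi> t - \<psi> 0 = (t - 0) *
      pd (\<lambda>\<eta>. pd g \<eta> v1) ((x + \<sigma> *\<^sub>R v1) + z *\<^sub>R v2) v2"
  proof (rule MVT2[OF st(2)])
    fix z assume z: "0 \<le> z" "z \<le> t"
    have i1: "(x + \<sigma> *\<^sub>R v1) + z *\<^sub>R v2 \<in> S" using box[of \<sigma> z] \<sigma> z by simp
    show "DERIV \<psi> z :> pd (\<lambda>\<eta>. pd g \<eta> v1) ((x + \<sigma> *\<^sub>R v1) + z *\<^sub>R v2) v2"
      unfolding \<psi>_def
      by (rule line_deriv[where h="\<lambda>\<eta>. pd g \<eta> v1"]) (use dif1 i1 in auto)
  qed
  then obtain \<tau> where \<tau>: "0 < \<tau>" "\<tau> < t" and e2: "\<psi> t - \<psi> 0 = t *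
      pd (\<lambda>\<eta>. pd g \<eta> v1) ((x + \<sigma> *\<^sub>R v1) + \<tau> *\<^sub>R v2) v2" by auto
  have "g (x + s *\<^sub>R v1 + t *\<^sub>R v2) - g (x + s *\<^sub>R v1) - g (x + t *\<^sub>R v2) + g x = \<phi> s - \<phi> 0"
    unfolding \<phi>_def by (simp add: algebra_simps)
  also have "\<dots> = s * (\<psi> t - \<psi> 0)" unfolding e1 \<psi>_def by (simp add: algebra_simps)
  also have "\<dots> = s * t * pd2 g (x + \<sigma> *\<^sub>R v1 + \<tau> *\<^sub>R v2) v1 v2"
    unfolding e2 pd2_def by simp
  finally show ?thesis using \<sigma> \<tau> by blast
qed

lemma pd2_sym:
  fixes g :: "'a::euclidean_space \<Rightarrow> real"
  assumes S: "open S" and C2: "C2_on S g" and xS: "x \<in> S" and v: "v1 \<in> Basis" "v2 \<in> Basis"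
  shows "pd2 g x v1 v2 = pd2 g x v2 v1"
proof (rule ccontr)
  assume ne: "pd2 g x v1 v2 \<noteq> pd2 g x v2 v1"
  define e where "e = \<bar>pd2 g x v1 v2 - pd2 g x v2 v1\<bar> / 2"
  have e: "e > 0" using ne unfolding e_def by simp
  obtain r where r: "r > 0" "ball x r \<subseteq> S" using S xS open_contains_ball by blast
  have c1: "isCont (\<lambda>th. pd2 g th v1 v2) x" and c2: "isCont (\<lambda>th. pd2 g th v2 v1) x"
    using C2 v S xS unfolding C2_on_def continuous_on_eq_continuous_at[OF S] by auto
  obtain d1 where d1: "d1 > 0" "\<And>y. dist y x < d1 \<Longrightarrow> dist (pd2 g y v1 v2) (pd2 g x v1 v2) < e"
    using c1 e unfolding continuous_at_eps_delta by blast
  obtain d2 where d2: "d2 > 0" "\<And>y. dist y x < d2 \<Longrightarrow> dist (pd2 g y v2 v1) (pd2 g x v2 v1) < e"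
    using c2 e unfolding continuous_at_eps_delta by blast
  define s where "s = min r (min d1 d2) / 3"
  have s: "s > 0" using r d1 d2 unfolding s_def by simp
  have near: "dist (x + a *\<^sub>R w1 + b *\<^sub>R w2) x < min r (min d1 d2)"
    if "0 \<le> a" "a \<le> s" "0 \<le> b" "b \<le> s" "w1 \<in> Basis" "w2 \<in> Basis" for a b w1 w2
  proof -
    have "dist (x + a *\<^sub>R w1 + b *\<^sub>R w2) x = norm (a *\<^sub>R w1 + b *\<^sub>R w2)"
      by (simp add: dist_norm)
    also have "\<dots> \<le> norm (a *\<^sub>R w1) + norm (b *\<^sub>R w2)" by (rule norm_triangle_ineq)
    also have "\<dots> = a + b" using that by simp
    also have "\<dots> < min r (min d1 d2)" using that s unfolding s_def by linarith
    finally show ?thesis .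
  qed
  have dif: "\<forall>\<eta>\<in>S. g differentiable (at \<eta>)" using C2 unfolding C2_on_def by blast
  have box: "x + a *\<^sub>R w1 + b *\<^sub>R w2 \<in> S"
    if "0 \<le> a" "a \<le> s" "0 \<le> b" "b \<le> s" "w1 \<in> Basis" "w2 \<in> Basis" for a b w1 w2
    using near[OF that] r by (auto simp: dist_commute)
  obtain a1 b1 where ab1: "0 < a1" "a1 < s" "0 < b1" "b1 < s" and E1:
    "g (x + s *\<^sub>R v1 + s *\<^sub>R v2) - g (x + s *\<^sub>R v1) - g (x + s *\<^sub>R v2) + g x
      = s * s * pd2 g (x + a1 *\<^sub>R v1 + b1 *\<^sub>R v2) v1 v2"
    using rect_mvt[OF dif _ s s, of v1 x v2] box v C2 unfolding C2_on_def by blast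
  obtain a2 b2 where ab2: "0 < a2" "a2 < s" "0 < b2" "b2 < s" and E2:
    "g (x + s *\<^sub>R v2 + s *\<^sub>R v1) - g (x + s *\<^sub>R v2) - g (x + s *\<^sub>R v1) + g x
      = s * s * pd2 g (x + a2 *\<^sub>R v2 + b2 *\<^sub>R v1) v2 v1"
    using rect_mvt[OF dif _ s s, of v2 x v1] box v C2 unfolding C2_on_def by blast
  have "s * s * pd2 g (x + a1 *\<^sub>R v1 + b1 *\<^sub>R v2) v1 v2 = s * s * pd2 g (x + a2 *\<^sub>R v2 + b2 *\<^sub>R v1) v2 v1"
    using E1 E2 by (simp add: algebra_simps)
  hence eq: "pd2 g (x + a1 *\<^sub>R v1 + b1 *\<^sub>R v2) v1 v2 = pd2 g (x + a2 *\<^sub>R v2 + b2 *\<^sub>R v1) v2 v1"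
    using s by simp
  have "dist (pd2 g (x + a1 *\<^sub>R v1 + b1 *\<^sub>R v2) v1 v2) (pd2 g x v1 v2) < e"
    using d1(2) near[of a1 b1 v1 v2] ab1 v by auto
  moreover have "dist (pd2 g (x + a2 *\<^sub>R v2 + b2 *\<^sub>R v1) v2 v1) (pd2 g x v2 v1) < e"
    using d2(2) near[of a2 b2 v2 v1] ab2 v by auto
  ultimately show False using eq unfolding e_def dist_real_def by (simp add: abs_if split: if_splits)
qed

lemma real_chain:
  assumes "(f has_real_derivative D) (at (g x))" "(g has_derivative g') (at x)"
  shows "((\<lambda>\<eta>. f (g \<eta>)) has_derivative (\<lambda>w. D * g' w)) (at x)"
  using has_derivative_compose[OF assms(2) assms(1)[unfolded has_field_derivative_def]] by simp

lemma hconj_facts: "p > 1 \<Longrightarrow> hconj p > 1 \<and> (hconj p - 1) * p = hconj p \<and> hconj p / p = hconj p - 1"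
  unfolding hconj_def by (auto simp: field_simps)

lemma psi_pos: "z > 0 \<Longrightarrow> psi q z = z powr (q - 1)"
  unfolding psi_def by simp

lemma psi_pow: "z > 0 \<Longrightarrow> \<bar>psi q z\<bar> powr p = z powr ((q - 1) * p)"
  unfolding psi_def by (simp add: powr_powr)

lemma psi_deriv:
  assumes z: "z > 0"
  shows "(psi q has_real_derivative ((q - 1) * psi q z / z)) (at z)"
proof (subst DERIV_cong_ev[OF refl _ refl])
  have "eventually (\<lambda>w. w \<in> {0<..}) (nhds z)" using z by (intro eventually_nhds_in_open) auto
  then show "eventually (\<lambda>z. psi q z = z powr (q - 1)) (nhds z)"
    by eventually_elim (auto simp add: psi_pos)
  have "(q - 1) * psi q z / z = (q - 1) * z powr (q - 1 - 1)"
    using z by (simp add: psi_pos powr_diff power2_eq_square)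
  then show "((\<lambda>z. z powr (q - 1)) has_real_derivative (q - 1) * psi q z / z) (at z)"
    using has_real_derivative_powr[OF z, of "q - 1"] by simp
qed

lemma phi_deriv:
  assumes z: "z > 0"
  shows "((\<lambda>z. \<bar>psi q z\<bar> powr p) has_real_derivative ((q - 1) * p * z powr ((q - 1) * p) / z)) (at z)"
proof (subst DERIV_cong_ev[OF refl _ refl])
  have "eventually (\<lambda>w. w \<in> {0<..}) (nhds z)" using z by (intro eventually_nhds_in_open) auto
  then show "eventually (\<lambda>z. \<bar>psi q z\<bar> powr p = z powr ((q - 1) * p)) (nhds z)"
    by eventually_elim (auto simp add: psi_pow)
  have "(q - 1) * p * z powr ((q - 1) * p) / z = (q - 1) * p * z powr ((q - 1) * p - 1)"
    using z by (simp add: powr_diff)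
  then show "((\<lambda>z. z powr ((q - 1) * p)) has_real_derivative (q - 1) * p * z powr ((q - 1) * p) / z) (at z)"
    using has_real_derivative_powr[OF z, of "(q - 1) * p"] by simp
qed

lemma norm_deriv:
  fixes g :: "'i::finite \<Rightarrow> 'a::real_normed_vector \<Rightarrow> real"
  assumes p: "p > 1" and gd: "\<And>t. (g t has_derivative g' t) (at th)" and gp: "\<And>t. g t th > 0"
  shows "((\<lambda>\<eta>. \<rho> * psi (hconj p) (g j \<eta>) / (\<Sum>t\<in>UNIV. \<bar>psi (hconj p) (g t \<eta>)\<bar> powr p) powr (1/p)) has_derivative
   (\<lambda>w. (\<rho> * psi (hconj p) (g j th) / (\<Sum>t\<in>UNIV. \<bar>psi (hconj p) (g t th)\<bar> powr p) powr (1/p)) * (hconj p - 1) *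
        (g' j w / g j th - (\<Sum>t\<in>UNIV. (g t th powr hconj p / (\<Sum>u\<in>UNIV. g u th powr hconj p)) * (g' t w / g t th))))) (at th)"
proof -
  define q where "q = hconj p"
  have q: "q > 1" "(q - 1) * p = q" "q / p = q - 1" using hconj_facts[OF p] unfolding q_def by auto
  define S where "S = (\<Sum>t\<in>UNIV. g t th powr q)"
  have gq: "\<And>t. g t th powr q > 0" using gp by (metis less_irrefl powr_gt_zero)
  have Sp: "S > 0" unfolding S_def
    by (rule sum_pos) (use gq in auto)
  have Seq: "(\<Sum>t\<in>UNIV. \<bar>psi q (g t th)\<bar> powr p) = S"
    unfolding S_def using gp q by (simp add: psi_pow)
  define N0 where "N0 = S powr (1/p)"
  have N0: "N0 > 0" using Sp unfolding N0_def by simp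
  have dP: "((\<lambda>\<eta>. \<rho> * psi q (g j \<eta>)) has_derivative (\<lambda>w. \<rho> * (((q - 1) * psi q (g j th) / g j th) * g' j w))) (at th)"
    by (rule has_derivative_mult_right, rule real_chain[OF psi_deriv[OF gp] gd])
  have dS: "((\<lambda>\<eta>. \<Sum>t\<in>UNIV. \<bar>psi q (g t \<eta>)\<bar> powr p) has_derivative
      (\<lambda>w. \<Sum>t\<in>UNIV. ((q - 1) * p * g t th powr ((q - 1) * p) / g t th) * g' t w)) (at th)"
    by (rule has_derivative_sum, rule real_chain[OF phi_deriv[OF gp] gd])
  have dN: "((\<lambda>\<eta>. (\<Sum>t\<in>UNIV. \<bar>psi q (g t \<eta>)\<bar> powr p) powr (1/p)) has_derivative
      (\<lambda>w. (1/p * S powr (1/p - 1)) * (\<Sum>t\<in>UNIV. ((q - 1) * p * g t th powr ((q - 1) * p) / g t th) * g' t w))) (at th)"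
  proof -
    have "((\<lambda>s. s powr (1/p)) has_real_derivative 1/p * S powr (1/p - 1)) (at (\<Sum>t\<in>UNIV. \<bar>psi q (g t th)\<bar> powr p))"
      using has_real_derivative_powr[OF Sp, of "1/p"] Seq by simp
    from real_chain[OF this dS] show ?thesis by simp
  qed
  have D: "((\<lambda>\<eta>. \<rho> * psi q (g j \<eta>) / (\<Sum>t\<in>UNIV. \<bar>psi q (g t \<eta>)\<bar> powr p) powr (1/p)) has_derivative
     (\<lambda>w. (\<rho> * (((q - 1) * psi q (g j th) / g j th) * g' j w) * N0 - \<rho> * psi q (g j th) *
        ((1/p * S powr (1/p - 1)) * (\<Sum>t\<in>UNIV. ((q - 1) * p * g t th powr ((q - 1) * p) / g t th) * g' t w))) / (N0 * N0))) (at th)"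
    using has_derivative_divide'[OF dP dN] Seq N0 unfolding N0_def by simp
  show ?thesis
    unfolding q_def[symmetric]
  proof (rule has_derivative_eq_rhs[OF D], rule ext)
    fix w
    have SN: "S powr (1/p - 1) = N0 / S" unfolding N0_def using Sp by (simp add: powr_diff)
    have sumeq: "(\<Sum>t\<in>UNIV. (g t th powr q / S) * (g' t w / g t th)) = (\<Sum>t\<in>UNIV. (g t th powr q / g t th) * g' t w) / S"
      by (simp add: sum_divide_distrib mult.commute)
    have sumeq2: "(\<Sum>t\<in>UNIV. ((q - 1) * p * g t th powr ((q - 1) * p) / g t th) * g' t w)
       = q * (\<Sum>t\<in>UNIV. (g t th powr q / g t th) * g' t w)"
      unfolding q(2) by (simp add: sum_distrib_left algebra_simps)
    have pq: "1 / p * q = q - 1" using q(3) by simp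
    have key: "(1/p * S powr (1/p - 1)) * (q * X) = (q - 1) * (N0 / S) * X" for X
      using pq SN by (metis (no_types, lifting) mult.assoc mult.left_commute)
    show "(\<rho> * (((q - 1) * psi q (g j th) / g j th) * g' j w) * N0 - \<rho> * psi q (g j th) *
        ((1/p * S powr (1/p - 1)) * (\<Sum>t\<in>UNIV. ((q - 1) * p * g t th powr ((q - 1) * p) / g t th) * g' t w))) / (N0 * N0)
      = \<rho> * psi q (g j th) / (\<Sum>t\<in>UNIV. \<bar>psi q (g t th)\<bar> powr p) powr (1/p) * (q - 1) *
        (g' j w / g j th - (\<Sum>t\<in>UNIV. (g t th powr q / (\<Sum>u\<in>UNIV. g u th powr q)) * (g' t w / g t th)))"
      unfolding Seq S_def[symmetric] N0_def[symmetric] sumeq sumeq2 key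
      using N0 Sp gp[of j] by (simp add: field_simps)
  qed
qed

lemma norm_bound:
  fixes G :: "'i::finite \<Rightarrow> real" and g' :: "'i \<Rightarrow> 's \<Rightarrow> real"
  assumes F0: "F0 > 0" and q: "q > 1" and B: "B \<ge> 0" and G: "\<And>t. G t > 0"
    and I: "finite I" and \<omega>: "\<And>s. s \<in> I \<Longrightarrow> \<omega> s \<ge> 0"
    and hyp: "\<And>t. (\<Sum>s\<in>I. \<omega> s * \<bar>g' t s\<bar>) \<le> B * G t"
  shows "(\<Sum>s\<in>I. \<bar>F0 * (q - 1) * (g' j s / G j - (\<Sum>t\<in>UNIV. (G t powr q / (\<Sum>u\<in>UNIV. G u powr q)) * (g' t s / G t)))\<bar> * \<omega> s)
     \<le> 2 * (q - 1) * B * F0"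
proof -
  define S where "S = (\<Sum>u\<in>UNIV. G u powr q)"
  define \<pi> where "\<pi> t = G t powr q / S" for t
  have Gq: "\<And>t. G t powr q > 0" using G by (metis less_irrefl powr_gt_zero)
  have Sp: "S > 0" unfolding S_def by (rule sum_pos) (use Gq in auto)
  have \<pi>0: "\<pi> t \<ge> 0" for t unfolding \<pi>_def using Gq[of t] Sp by simp
  have \<pi>1: "(\<Sum>t\<in>UNIV. \<pi> t) = 1" unfolding \<pi>_def using Sp by (simp add: sum_divide_distrib[symmetric] S_def)
  define c where "c = F0 * (q - 1)"
  have c: "c > 0" unfolding c_def using F0 q by simp
  have h1: "\<bar>c * (g' j s / G j - (\<Sum>t\<in>UNIV. \<pi> t * (g' t s / G t)))\<bar> * \<omega> s
      \<le> c * (\<omega> s * \<bar>g' j s\<bar> / G j + (\<Sum>t\<in>UNIV. \<pi> t * (\<omega> s * \<bar>g' t s\<bar> / G t)))" if s: "s \<in> I" for s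
  proof -
    have "\<bar>(\<Sum>t\<in>UNIV. \<pi> t * (g' t s / G t))\<bar> \<le> (\<Sum>t\<in>UNIV. \<bar>\<pi> t * (g' t s / G t)\<bar>)"
      by (rule sum_abs)
    also have "\<dots> = (\<Sum>t\<in>UNIV. \<pi> t * (\<bar>g' t s\<bar> / G t))"
      using \<pi>0 G by (intro sum.cong) (auto simp: abs_mult less_imp_le)
    finally have a: "\<bar>(\<Sum>t\<in>UNIV. \<pi> t * (g' t s / G t))\<bar> \<le> (\<Sum>t\<in>UNIV. \<pi> t * (\<bar>g' t s\<bar> / G t))" .
    have b: "\<bar>g' j s / G j\<bar> = \<bar>g' j s\<bar> / G j" using G[of j] by simp
    have "\<bar>g' j s / G j - (\<Sum>t\<in>UNIV. \<pi> t * (g' t s / G t))\<bar> \<le> \<bar>g' j s\<bar> / G j + (\<Sum>t\<in>UNIV. \<pi> t * (\<bar>g' t s\<bar> / G t))"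
      using a b abs_triangle_ineq4[of "g' j s / G j" "(\<Sum>t\<in>UNIV. \<pi> t * (g' t s / G t))"] by linarith
    hence "\<bar>c * (g' j s / G j - (\<Sum>t\<in>UNIV. \<pi> t * (g' t s / G t)))\<bar> * \<omega> s
        \<le> c * (\<bar>g' j s\<bar> / G j + (\<Sum>t\<in>UNIV. \<pi> t * (\<bar>g' t s\<bar> / G t))) * \<omega> s"
      using c \<omega>[OF s] by (simp add: abs_mult mult_right_mono)
    also have "\<dots> = c * (\<omega> s * \<bar>g' j s\<bar> / G j + (\<Sum>t\<in>UNIV. \<pi> t * (\<omega> s * \<bar>g' t s\<bar> / G t)))"
      by (simp add: algebra_simps sum_distrib_left sum_distrib_right)
    finally show ?thesis .
  qed
  have "(\<Sum>s\<in>I. \<bar>c * (g' j s / G j - (\<Sum>t\<in>UNIV. \<pi> t * (g' t s / G t)))\<bar> * \<omega> s)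
      \<le> (\<Sum>s\<in>I. c * (\<omega> s * \<bar>g' j s\<bar> / G j + (\<Sum>t\<in>UNIV. \<pi> t * (\<omega> s * \<bar>g' t s\<bar> / G t))))"
    by (rule sum_mono) (rule h1)
  also have "\<dots> = c * ((\<Sum>s\<in>I. \<omega> s * \<bar>g' j s\<bar>) / G j + (\<Sum>t\<in>UNIV. \<pi> t * ((\<Sum>s\<in>I. \<omega> s * \<bar>g' t s\<bar>) / G t)))"
    by (simp add: sum_distrib_left sum.distrib sum_divide_distrib sum.swap[of _ I] algebra_simps)
  also have "\<dots> \<le> c * (B + (\<Sum>t\<in>UNIV. \<pi> t * B))"
  proof -
    have "(\<Sum>s\<in>I. \<omega> s * \<bar>g' j s\<bar>) / G j \<le> B" using hyp[of j] G[of j] by (simp add: divide_le_eq)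
    moreover have "(\<Sum>t\<in>UNIV. \<pi> t * ((\<Sum>s\<in>I. \<omega> s * \<bar>g' t s\<bar>) / G t)) \<le> (\<Sum>t\<in>UNIV. \<pi> t * B)"
      by (rule sum_mono, rule mult_left_mono) (use hyp G \<pi>0 in \<open>auto simp: divide_le_eq\<close>)
    ultimately show ?thesis using c by simp
  qed
  also have "\<dots> = 2 * (q - 1) * B * F0"
  proof -
    have "(\<Sum>t\<in>UNIV. \<pi> t * B) = B" using \<pi>1 by (simp add: sum_distrib_right[symmetric])
    thus ?thesis unfolding c_def by (simp add: algebra_simps)
  qed
  finally show ?thesis unfolding \<pi>_def S_def c_def by (simp add: mult.assoc)
qed



lemma dev_bound:
  fixes \<sigma> :: "'k::finite \<Rightarrow> real" and D :: "'k \<Rightarrow> real"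
  assumes \<sigma>0: "\<And>r. \<sigma> r \<ge> 0" and \<sigma>1: "(\<Sum>r\<in>UNIV. \<sigma> r) = 1" and D0: "\<And>r. D r \<ge> 0"
  shows "\<bar>D r - (\<Sum>q\<in>UNIV. \<sigma> q * D q)\<bar> \<le> (\<Sum>q\<in>UNIV-{r}. \<sigma> q * (D r + D q))"
proof -
  have "D r - (\<Sum>q\<in>UNIV. \<sigma> q * D q) = (\<Sum>q\<in>UNIV. \<sigma> q * (D r - D q))"
  proof -
    have "(\<Sum>q\<in>UNIV. \<sigma> q * (D r - D q)) = D r * (\<Sum>q\<in>UNIV. \<sigma> q) - (\<Sum>q\<in>UNIV. \<sigma> q * D q)"
      by (simp add: sum_distrib_left sum_subtractf algebra_simps)
    thus ?thesis using \<sigma>1 by simp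
  qed
  also have "\<dots> = (\<Sum>q\<in>UNIV-{r}. \<sigma> q * (D r - D q))"
    by (rule sum.mono_neutral_right) auto
  finally have "\<bar>D r - (\<Sum>q\<in>UNIV. \<sigma> q * D q)\<bar> = \<bar>\<Sum>q\<in>UNIV-{r}. \<sigma> q * (D r - D q)\<bar>" by simp
  also have "\<dots> \<le> (\<Sum>q\<in>UNIV-{r}. \<bar>\<sigma> q * (D r - D q)\<bar>)" by (rule sum_abs)
  also have "\<dots> \<le> (\<Sum>q\<in>UNIV-{r}. \<sigma> q * (D r + D q))"
  proof (rule sum_mono)
    fix q
    have "\<bar>D r - D q\<bar> \<le> D r + D q" using D0[of r] D0[of q] by simp
    thus "\<bar>\<sigma> q * (D r - D q)\<bar> \<le> \<sigma> q * (D r + D q)" using \<sigma>0[of q] by (simp add: abs_mult mult_left_mono)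
  qed
  finally show ?thesis .
qed

lemma sample_bound:
  fixes \<sigma> c d :: "'k::finite \<Rightarrow> real" and D e :: "'s \<Rightarrow> 'k \<Rightarrow> real" and \<omega> :: "'s \<Rightarrow> real"
  assumes \<sigma>0: "\<And>r. \<sigma> r \<ge> 0" and \<sigma>1: "(\<Sum>r\<in>UNIV. \<sigma> r) = 1"
    and c: "\<And>r. c r = (if r = yl then 1 else 0) + 1 - \<sigma> r"
    and d0: "\<And>r. d r \<ge> 0" and I: "finite I"
    and D0: "\<And>s r. s \<in> I \<Longrightarrow> D s r \<ge> 0" and e0: "\<And>s r. s \<in> I \<Longrightarrow> e s r \<ge> 0"
    and \<omega>0: "\<And>s. s \<in> I \<Longrightarrow> \<omega> s \<ge> 0" and C: "C \<ge> 0"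
    and hC: "\<And>r. (\<Sum>s\<in>I. \<omega> s * D s r) \<le> C"
    and hM: "\<And>r. (\<Sum>s\<in>I. \<omega> s * e s r) \<le> M * d r"
  shows "(\<Sum>s\<in>I. \<omega> s * \<bar>\<Sum>r\<in>UNIV. c r * e s r - \<sigma> r * (D s r - (\<Sum>q\<in>UNIV. \<sigma> q * D s q)) * d r\<bar>)
     \<le> (2 * C + M) * (\<Sum>r\<in>UNIV. c r * d r)"
proof -
  have \<sigma>le: "\<sigma> r \<le> 1" for r
    using member_le_sum[of r UNIV \<sigma>] \<sigma>0 \<sigma>1 by simp
  have c0: "c r \<ge> 0" and c1: "1 - \<sigma> r \<le> c r" for r using c[of r] \<sigma>le[of r] by auto
  define T where "T s r = (\<Sum>q\<in>UNIV-{r}. \<sigma> q * (D s r + D s q))" for s r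
  have step1: "\<omega> s * \<bar>\<Sum>r\<in>UNIV. c r * e s r - \<sigma> r * (D s r - (\<Sum>q\<in>UNIV. \<sigma> q * D s q)) * d r\<bar>
      \<le> (\<Sum>r\<in>UNIV. c r * (\<omega> s * e s r) + \<sigma> r * d r * (\<omega> s * T s r))" if s: "s \<in> I" for s
  proof -
    have "\<bar>\<Sum>r\<in>UNIV. c r * e s r - \<sigma> r * (D s r - (\<Sum>q\<in>UNIV. \<sigma> q * D s q)) * d r\<bar>
        \<le> (\<Sum>r\<in>UNIV. \<bar>c r * e s r - \<sigma> r * (D s r - (\<Sum>q\<in>UNIV. \<sigma> q * D s q)) * d r\<bar>)" by (rule sum_abs)
    also have "\<dots> \<le> (\<Sum>r\<in>UNIV. c r * e s r + \<sigma> r * d r * T s r)"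
    proof (rule sum_mono)
      fix r
      have a: "\<bar>D s r - (\<Sum>q\<in>UNIV. \<sigma> q * D s q)\<bar> \<le> T s r"
        unfolding T_def by (rule dev_bound) (use \<sigma>0 \<sigma>1 D0 s in auto)
      have b: "\<bar>\<sigma> r * (D s r - (\<Sum>q\<in>UNIV. \<sigma> q * D s q)) * d r\<bar> \<le> \<sigma> r * d r * T s r"
        using a \<sigma>0[of r] d0[of r] by (simp add: abs_mult mult_left_mono mult.commute mult.left_commute)
      have "c r * e s r \<ge> 0" using c0 e0 s by simp
      thus "\<bar>c r * e s r - \<sigma> r * (D s r - (\<Sum>q\<in>UNIV. \<sigma> q * D s q)) * d r\<bar> \<le> c r * e s r + \<sigma> r * d r * T s r"
        using b by linarith
    qed
    finally have "\<bar>\<Sum>r\<in>UNIV. c r * e s r - \<sigma> r * (D s r - (\<Sum>q\<in>UNIV. \<sigma> q * D s q)) * d r\<bar>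
      \<le> (\<Sum>r\<in>UNIV. c r * e s r + \<sigma> r * d r * T s r)" .
    hence "\<omega> s * \<bar>\<Sum>r\<in>UNIV. c r * e s r - \<sigma> r * (D s r - (\<Sum>q\<in>UNIV. \<sigma> q * D s q)) * d r\<bar>
      \<le> \<omega> s * (\<Sum>r\<in>UNIV. c r * e s r + \<sigma> r * d r * T s r)" using \<omega>0[OF s] by (rule mult_left_mono)
    also have "\<dots> = (\<Sum>r\<in>UNIV. c r * (\<omega> s * e s r) + \<sigma> r * d r * (\<omega> s * T s r))"
      by (simp add: sum_distrib_left algebra_simps)
    finally show ?thesis .
  qed
  have sT: "(\<Sum>s\<in>I. \<omega> s * T s r) \<le> 2 * C * (1 - \<sigma> r)" for r
  proof -
    have "(\<Sum>s\<in>I. \<omega> s * T s r) = (\<Sum>q\<in>UNIV-{r}. \<sigma> q * ((\<Sum>s\<in>I. \<omega> s * D s r) + (\<Sum>s\<in>I. \<omega> s * D s q)))"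
      unfolding T_def by (simp add: sum_distrib_left sum.distrib sum.swap[of _ I] algebra_simps)
    also have "\<dots> \<le> (\<Sum>q\<in>UNIV-{r}. \<sigma> q * (2 * C))"
      by (rule sum_mono, rule mult_left_mono) (use hC \<sigma>0 in \<open>auto intro: add_mono[of _ C _ C, simplified]\<close>)
    also have "\<dots> = 2 * C * (\<Sum>q\<in>UNIV-{r}. \<sigma> q)" by (simp add: sum_distrib_left mult.commute)
    also have "(\<Sum>q\<in>UNIV-{r}. \<sigma> q) = 1 - \<sigma> r" using \<sigma>1 sum_diff1[of UNIV \<sigma> r] by simp
    finally show ?thesis .
  qed
  have "(\<Sum>s\<in>I. \<omega> s * \<bar>\<Sum>r\<in>UNIV. c r * e s r - \<sigma> r * (D s r - (\<Sum>q\<in>UNIV. \<sigma> q * D s q)) * d r\<bar>)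
      \<le> (\<Sum>s\<in>I. \<Sum>r\<in>UNIV. c r * (\<omega> s * e s r) + \<sigma> r * d r * (\<omega> s * T s r))"
    by (rule sum_mono) (rule step1)
  also have "\<dots> = (\<Sum>r\<in>UNIV. c r * (\<Sum>s\<in>I. \<omega> s * e s r) + \<sigma> r * d r * (\<Sum>s\<in>I. \<omega> s * T s r))"
    by (simp add: sum.swap[of _ I] sum.distrib sum_distrib_left)
  also have "\<dots> \<le> (\<Sum>r\<in>UNIV. (2 * C + M) * (c r * d r))"
  proof (rule sum_mono)
    fix r
    have a: "c r * (\<Sum>s\<in>I. \<omega> s * e s r) \<le> c r * (M * d r)" using hM c0 by (simp add: mult_left_mono)
    have "\<sigma> r * d r * (\<Sum>s\<in>I. \<omega> s * T s r) \<le> \<sigma> r * d r * (2 * C * (1 - \<sigma> r))"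
      using sT \<sigma>0 d0 by (simp add: mult_left_mono)
    also have "\<dots> \<le> 2 * C * (c r * d r)"
    proof -
      have "\<sigma> r * (1 - \<sigma> r) \<le> c r" using \<sigma>0[of r] \<sigma>le[of r] c1[of r]
        by (smt (verit) mult_left_le_one_le)
      hence "d r * (\<sigma> r * (1 - \<sigma> r)) \<le> d r * c r" using d0 by (simp add: mult_left_mono)
      hence "2 * C * (d r * (\<sigma> r * (1 - \<sigma> r))) \<le> 2 * C * (d r * c r)" using C by (simp add: mult_left_mono)
      moreover have "\<sigma> r * d r * (2 * C * (1 - \<sigma> r)) = 2 * C * (d r * (\<sigma> r * (1 - \<sigma> r)))" by (simp add: algebra_simps)
      moreover have "2 * C * (c r * d r) = 2 * C * (d r * c r)" by simp
      ultimately show ?thesis by linarith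
    qed
    finally show "c r * (\<Sum>s\<in>I. \<omega> s * e s r) + \<sigma> r * d r * (\<Sum>s\<in>I. \<omega> s * T s r) \<le> (2 * C + M) * (c r * d r)"
      using a by (simp add: algebra_simps)
  qed
  also have "\<dots> = (2 * C + M) * (\<Sum>r\<in>UNIV. c r * d r)" by (simp add: sum_distrib_left)
  finally show ?thesis .
qed

definition sm :: "('k::finite \<Rightarrow> real) \<Rightarrow> 'k \<Rightarrow> real" where
  "sm z r = exp (z r) / (\<Sum>j\<in>UNIV. exp (z j))"
definition cc :: "'k::finite \<Rightarrow> ('k \<Rightarrow> real) \<Rightarrow> 'k \<Rightarrow> real" where
  "cc yl z r = (if r = yl then 1 else 0) + 1 - sm z r"

lemma sample_deriv:
  fixes F :: "'k::finite \<Rightarrow> 'a::real_normed_vector \<Rightarrow> real"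
  assumes d: "\<And>r. (F r has_derivative F' r) (at \<eta>)"
  shows "((\<lambda>\<eta>. - CE_loss yl (\<lambda>r. F r \<eta>) + (\<Sum>r\<in>UNIV. F r \<eta>)) has_derivative
     (\<lambda>v. \<Sum>r\<in>UNIV. cc yl (\<lambda>r. F r \<eta>) r * F' r v)) (at \<eta>)"
proof -
  define Z where "Z = (\<Sum>j\<in>UNIV. exp (F j \<eta>))"
  have Zp: "Z > 0" unfolding Z_def by (rule sum_pos) auto
  have dZ: "((\<lambda>\<eta>. \<Sum>j\<in>UNIV. exp (F j \<eta>)) has_derivative (\<lambda>v. \<Sum>j\<in>UNIV. exp (F j \<eta>) * F' j v)) (at \<eta>)"
    by (intro has_derivative_sum real_chain[OF DERIV_exp d])
  have dL: "((\<lambda>\<eta>. ln (\<Sum>j\<in>UNIV. exp (F j \<eta>))) has_derivative (\<lambda>v. inverse Z * (\<Sum>j\<in>UNIV. exp (F j \<eta>) * F' j v))) (at \<eta>)"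
    by (rule real_chain[OF _ dZ]) (use Zp DERIV_ln in \<open>auto simp: Z_def\<close>)
  have D: "((\<lambda>\<eta>. - CE_loss yl (\<lambda>r. F r \<eta>) + (\<Sum>r\<in>UNIV. F r \<eta>)) has_derivative
     (\<lambda>v. F' yl v - inverse Z * (\<Sum>j\<in>UNIV. exp (F j \<eta>) * F' j v) + (\<Sum>r\<in>UNIV. F' r v))) (at \<eta>)"
    unfolding CE_loss_def using has_derivative_add[OF has_derivative_diff[OF d[of yl] dL] has_derivative_sum[OF d]]
    by simp
  show ?thesis
  proof (rule has_derivative_eq_rhs[OF D], rule ext)
    fix v
    have "(\<Sum>r\<in>UNIV. cc yl (\<lambda>r. F r \<eta>) r * F' r v) =
       (\<Sum>r\<in>UNIV. (if r = yl then F' r v else 0)) + (\<Sum>r\<in>UNIV. F' r v) - (\<Sum>r\<in>UNIV. exp (F r \<eta>) / Z * F' r v)"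
    proof -
      have "\<And>r. cc yl (\<lambda>r. F r \<eta>) r * F' r v = ((if r = yl then F' r v else 0) + F' r v) - exp (F r \<eta>) / Z * F' r v"
        unfolding cc_def sm_def Z_def by (simp add: algebra_simps)
      hence "(\<Sum>r\<in>UNIV. cc yl (\<lambda>r. F r \<eta>) r * F' r v) = (\<Sum>r\<in>UNIV. ((if r = yl then F' r v else 0) + F' r v) - exp (F r \<eta>) / Z * F' r v)"
        by simp
      thus ?thesis by (simp only: sum_subtractf sum.distrib)
    qed
    also have "\<dots> = F' yl v - inverse Z * (\<Sum>j\<in>UNIV. exp (F j \<eta>) * F' j v) + (\<Sum>r\<in>UNIV. F' r v)"
      by (simp add: sum_distrib_left divide_inverse algebra_simps)
    finally show "F' yl v - inverse Z * (\<Sum>j\<in>UNIV. exp (F j \<eta>) * F' j v) + (\<Sum>r\<in>UNIV. F' r v) =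
       (\<Sum>r\<in>UNIV. cc yl (\<lambda>r. F r \<eta>) r * F' r v)" by simp
  qed
qed
definition Ent :: "('k::finite,'h::finite,'d::finite) param \<Rightarrow> real" where
  "Ent v = (\<Sum>r\<in>UNIV. \<Sum>l\<in>UNIV. fst v $ r $ l) + (\<Sum>l\<in>UNIV. \<Sum>m\<in>UNIV. snd v $ l $ m)"

lemma Ent_deriv: "(Ent has_derivative Ent) (at \<eta>)"
proof -
  have bl1: "bounded_linear (\<lambda>v::('k::finite,'h::finite,'d::finite) param. fst v $ r $ l)" for r l
    by (intro bounded_linear_compose[OF bounded_linear_vec_nth] bounded_linear_compose[OF bounded_linear_vec_nth] bounded_linear_fst)
  have bl2: "bounded_linear (\<lambda>v::('k::finite,'h::finite,'d::finite) param. snd v $ r $ l)" for r l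
    by (intro bounded_linear_compose[OF bounded_linear_vec_nth] bounded_linear_compose[OF bounded_linear_vec_nth] bounded_linear_snd)
  show ?thesis unfolding Ent_def[abs_def]
    by (intro has_derivative_add has_derivative_sum bounded_linear_imp_has_derivative bl1 bl2)
qed

lemma axis_sum: "(\<Sum>l\<in>UNIV. axis s (axis t (1::real)) $ r $ l) = (if r = s then 1 else 0)"
  by (cases "r = s") (simp_all add: axis_def)

lemma Ent_dirW: "Ent (dirW s t) = 1"
  unfolding Ent_def dirW_def by (simp add: axis_sum)

lemma Ent_dirU: "Ent (dirU a b) = 1"
  unfolding Ent_def dirU_def by (simp add: axis_sum)

lemma Phi_deriv:
  fixes f :: "'k::finite \<Rightarrow> real^'d::finite \<Rightarrow> ('k,'h::finite,'d) param \<Rightarrow> real"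
  assumes d: "\<And>r l. l < n \<Longrightarrow> f r (x l) differentiable (at \<eta>)"
  shows "(Phi f x y n \<epsilon> has_derivative (\<lambda>v. (1 / real n) * (\<Sum>l<n. \<Sum>r\<in>UNIV. cc (y l) (\<lambda>r. f r (x l) \<eta>) r * pd (f r (x l)) \<eta> v) + \<epsilon> * Ent v)) (at \<eta>)"
proof -
  have s: "((\<lambda>\<eta>. - CE_loss (y l) (\<lambda>r. f r (x l) \<eta>) + (\<Sum>r\<in>UNIV. f r (x l) \<eta>)) has_derivative
     (\<lambda>v. \<Sum>r\<in>UNIV. cc (y l) (\<lambda>r. f r (x l) \<eta>) r * pd (f r (x l)) \<eta> v)) (at \<eta>)" if "l \<in> {..<n}" for l
    unfolding pd_def
    by (rule sample_deriv) (use d that frechet_derivative_works in auto)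
  have "(Phi f x y n \<epsilon> has_derivative (\<lambda>v. (1 / real n) * (\<Sum>l<n. \<Sum>r\<in>UNIV. cc (y l) (\<lambda>r. f r (x l) \<eta>) r * pd (f r (x l)) \<eta> v) + \<epsilon> * Ent v)) (at \<eta>)"
    unfolding Phi_def[abs_def] Ent_def[symmetric]
    by (intro has_derivative_add has_derivative_mult_right has_derivative_sum s Ent_deriv)
  thus ?thesis .
qed

lemma sm_deriv:
  fixes F :: "'k::finite \<Rightarrow> 'a::real_normed_vector \<Rightarrow> real"
  assumes d: "\<And>r. (F r has_derivative F' r) (at \<eta>)"
  shows "((\<lambda>\<eta>. sm (\<lambda>r. F r \<eta>) r) has_derivative
     (\<lambda>w. sm (\<lambda>r. F r \<eta>) r * (F' r w - (\<Sum>q\<in>UNIV. sm (\<lambda>r. F r \<eta>) q * F' q w)))) (at \<eta>)"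
proof -
  define Z where "Z = (\<Sum>j\<in>UNIV. exp (F j \<eta>))"
  have Zp: "Z > 0" unfolding Z_def by (rule sum_pos) auto
  have dZ: "((\<lambda>\<eta>. \<Sum>j\<in>UNIV. exp (F j \<eta>)) has_derivative (\<lambda>v. \<Sum>j\<in>UNIV. exp (F j \<eta>) * F' j v)) (at \<eta>)"
    by (intro has_derivative_sum real_chain[OF DERIV_exp d])
  have D: "((\<lambda>\<eta>. sm (\<lambda>r. F r \<eta>) r) has_derivative
     (\<lambda>w. ((exp (F r \<eta>) * F' r w) * Z - exp (F r \<eta>) * (\<Sum>j\<in>UNIV. exp (F j \<eta>) * F' j w)) / (Z * Z))) (at \<eta>)"
    unfolding sm_def using has_derivative_divide'[OF real_chain[OF DERIV_exp d] dZ] Zp unfolding Z_def by simp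
  show ?thesis
  proof (rule has_derivative_eq_rhs[OF D], rule ext)
    fix w
    have "(\<Sum>q\<in>UNIV. sm (\<lambda>r. F r \<eta>) q * F' q w) = (\<Sum>j\<in>UNIV. exp (F j \<eta>) * F' j w) / Z"
      unfolding sm_def Z_def[symmetric] by (simp add: sum_divide_distrib)
    thus "((exp (F r \<eta>) * F' r w) * Z - exp (F r \<eta>) * (\<Sum>j\<in>UNIV. exp (F j \<eta>) * F' j w)) / (Z * Z) =
       sm (\<lambda>r. F r \<eta>) r * (F' r w - (\<Sum>q\<in>UNIV. sm (\<lambda>r. F r \<eta>) q * F' q w))"
      unfolding sm_def Z_def[symmetric] using Zp by (simp add: field_simps)
  qed
qed

definition Gfun :: "('k::finite \<Rightarrow> real^'d::finite \<Rightarrow> ('k,'h::finite,'d) param \<Rightarrow> real)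
      \<Rightarrow> (nat \<Rightarrow> real^'d) \<Rightarrow> (nat \<Rightarrow> 'k) \<Rightarrow> nat \<Rightarrow> real \<Rightarrow> ('k,'h,'d) param \<Rightarrow> ('k,'h,'d) param \<Rightarrow> real" where
  "Gfun f x y n \<epsilon> v \<eta> = (1 / real n) * (\<Sum>l<n. \<Sum>r\<in>UNIV. cc (y l) (\<lambda>r. f r (x l) \<eta>) r * pd (f r (x l)) \<eta> v) + \<epsilon> * Ent v"

lemma G_deriv:
  fixes f :: "'k::finite \<Rightarrow> real^'d::finite \<Rightarrow> ('k,'h::finite,'d) param \<Rightarrow> real"
  assumes d: "\<And>r l. l < n \<Longrightarrow> f r (x l) differentiable (at th)"
    and d1: "\<And>r l. l < n \<Longrightarrow> (\<lambda>\<eta>. pd (f r (x l)) \<eta> v) differentiable (at th)"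
  shows "(Gfun f x y n \<epsilon> v has_derivative (\<lambda>w. (1 / real n) * (\<Sum>l<n. \<Sum>r\<in>UNIV.
      cc (y l) (\<lambda>r. f r (x l) th) r * pd2 (f r (x l)) th v w
      - sm (\<lambda>r. f r (x l) th) r * (pd (f r (x l)) th w - (\<Sum>q\<in>UNIV. sm (\<lambda>r. f r (x l) th) q * pd (f q (x l)) th w))
        * pd (f r (x l)) th v))) (at th)"
proof -
  have t: "((\<lambda>\<eta>. cc (y l) (\<lambda>r. f r (x l) \<eta>) r * pd (f r (x l)) \<eta> v) has_derivative (\<lambda>w.
      cc (y l) (\<lambda>r. f r (x l) th) r * pd2 (f r (x l)) th v w
      - sm (\<lambda>r. f r (x l) th) r * (pd (f r (x l)) th w - (\<Sum>q\<in>UNIV. sm (\<lambda>r. f r (x l) th) q * pd (f q (x l)) th w))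
        * pd (f r (x l)) th v)) (at th)" if l: "l \<in> {..<n}" for l r
  proof -
    have fd: "\<And>r. (f r (x l) has_derivative pd (f r (x l)) th) (at th)"
      unfolding pd_def[abs_def] using d l frechet_derivative_works by auto
    have smd: "((\<lambda>\<eta>. sm (\<lambda>r. f r (x l) \<eta>) r) has_derivative
     (\<lambda>w. sm (\<lambda>r. f r (x l) th) r * (pd (f r (x l)) th w - (\<Sum>q\<in>UNIV. sm (\<lambda>r. f r (x l) th) q * pd (f q (x l)) th w)))) (at th)"
      using sm_deriv[where F="\<lambda>r. f r (x l)" and F'="\<lambda>r. pd (f r (x l)) th", OF fd] by simp
    have ccd: "((\<lambda>\<eta>. cc (y l) (\<lambda>r. f r (x l) \<eta>) r) has_derivative
     (\<lambda>w. - (sm (\<lambda>r. f r (x l) th) r * (pd (f r (x l)) th w - (\<Sum>q\<in>UNIV. sm (\<lambda>r. f r (x l) th) q * pd (f q (x l)) th w))))) (at th)"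
      unfolding cc_def using has_derivative_diff[OF has_derivative_const smd] by simp
    have pdd: "((\<lambda>\<eta>. pd (f r (x l)) \<eta> v) has_derivative (\<lambda>w. pd2 (f r (x l)) th v w)) (at th)"
      unfolding pd2_def pd_def[of "\<lambda>\<eta>. pd (f r (x l)) \<eta> v"]
      using d1 l frechet_derivative_works by auto
    show ?thesis using has_derivative_mult[OF ccd pdd] by (simp add: algebra_simps)
  qed
  show ?thesis unfolding Gfun_def[abs_def]
    by (intro has_derivative_add[where g'="\<lambda>_. 0", simplified] has_derivative_mult_right has_derivative_sum t has_derivative_const)
qed

lemma sm_nonneg: "sm z r \<ge> 0"
  unfolding sm_def by (simp add: sum_nonneg)

lemma sm_sum: "(\<Sum>r\<in>UNIV. sm z r) = 1"
proof -
  have "(\<Sum>j\<in>UNIV. exp (z j)) > 0" by (rule sum_pos) auto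
  thus ?thesis unfolding sm_def by (simp add: sum_divide_distrib[symmetric])
qed

lemma sm_le1: "sm z r \<le> 1"
  using member_le_sum[of r UNIV "sm z"] sm_nonneg[of z] sm_sum[of z] by simp

lemma cc_nonneg: "cc yl z r \<ge> 0"
  unfolding cc_def using sm_le1[of z r] by auto

lemma G_pos:
  fixes f :: "'k::finite \<Rightarrow> real^'d::finite \<Rightarrow> ('k,'h::finite,'d) param \<Rightarrow> real"
  assumes d0: "\<And>r l. l < n \<Longrightarrow> pd (f r (x l)) th v \<ge> 0" and eps: "\<epsilon> > 0" and E: "Ent v = 1"
  shows "Gfun f x y n \<epsilon> v th > 0"
proof -
  have "(\<Sum>l<n. \<Sum>r\<in>UNIV. cc (y l) (\<lambda>r. f r (x l) th) r * pd (f r (x l)) th v) \<ge> 0"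
    by (intro sum_nonneg mult_nonneg_nonneg cc_nonneg) (use d0 in auto)
  thus ?thesis unfolding Gfun_def using eps E by (simp add: add_nonneg_pos)
qed

lemma G_bound:
  fixes f :: "'k::finite \<Rightarrow> real^'d::finite \<Rightarrow> ('k,'h::finite,'d) param \<Rightarrow> real"
    and w :: "'s \<Rightarrow> ('k,'h,'d) param"
  assumes n: "n > 0" and eps: "\<epsilon> > 0" and E: "Ent v = 1"
    and d0: "\<And>r l. l < n \<Longrightarrow> pd (f r (x l)) th v \<ge> 0"
    and D0: "\<And>r l s. l < n \<Longrightarrow> s \<in> I \<Longrightarrow> pd (f r (x l)) th (w s) \<ge> 0"
    and e0: "\<And>r l s. l < n \<Longrightarrow> s \<in> I \<Longrightarrow> pd2 (f r (x l)) th v (w s) \<ge> 0"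
    and I: "finite I" and \<omega>0: "\<And>s. s \<in> I \<Longrightarrow> \<omega> s \<ge> 0" and C: "C \<ge> 0" and M: "M \<ge> 0"
    and hC: "\<And>r l. l < n \<Longrightarrow> (\<Sum>s\<in>I. \<omega> s * pd (f r (x l)) th (w s)) \<le> C"
    and hM: "\<And>r l. l < n \<Longrightarrow> (\<Sum>s\<in>I. \<omega> s * pd2 (f r (x l)) th v (w s)) \<le> M * pd (f r (x l)) th v"
  shows "(\<Sum>s\<in>I. \<omega> s * \<bar>(1 / real n) * (\<Sum>l<n. \<Sum>r\<in>UNIV.
      cc (y l) (\<lambda>r. f r (x l) th) r * pd2 (f r (x l)) th v (w s)
      - sm (\<lambda>r. f r (x l) th) r * (pd (f r (x l)) th (w s) - (\<Sum>q\<in>UNIV. sm (\<lambda>r. f r (x l) th) q * pd (f q (x l)) th (w s)))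
        * pd (f r (x l)) th v)\<bar>) \<le> (2 * C + M) * Gfun f x y n \<epsilon> v th"
proof -
  define h where "h l = (\<Sum>r\<in>UNIV. cc (y l) (\<lambda>r. f r (x l) th) r * pd (f r (x l)) th v)" for l
  define T where "T s l = (\<Sum>r\<in>UNIV.
      cc (y l) (\<lambda>r. f r (x l) th) r * pd2 (f r (x l)) th v (w s)
      - sm (\<lambda>r. f r (x l) th) r * (pd (f r (x l)) th (w s) - (\<Sum>q\<in>UNIV. sm (\<lambda>r. f r (x l) th) q * pd (f q (x l)) th (w s)))
        * pd (f r (x l)) th v)" for s l
  have per: "(\<Sum>s\<in>I. \<omega> s * \<bar>T s l\<bar>) \<le> (2 * C + M) * h l" if l: "l < n" for l
    unfolding T_def h_def
    by (rule sample_bound[where \<sigma>="sm (\<lambda>r. f r (x l) th)" and yl="y l" and D="\<lambda>s r. pd (f r (x l)) th (w s)"])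
       (use sm_nonneg sm_sum d0 D0 e0 I \<omega>0 C hC hM l in \<open>auto simp: cc_def\<close>)
  have "(\<Sum>s\<in>I. \<omega> s * \<bar>(1 / real n) * (\<Sum>l<n. T s l)\<bar>) \<le> (\<Sum>s\<in>I. (1 / real n) * (\<Sum>l<n. \<omega> s * \<bar>T s l\<bar>))"
  proof (rule sum_mono)
    fix s assume s: "s \<in> I"
    have "\<bar>(1 / real n) * (\<Sum>l<n. T s l)\<bar> \<le> (1 / real n) * (\<Sum>l<n. \<bar>T s l\<bar>)"
      using n by (simp add: abs_mult sum_abs divide_right_mono)
    hence "\<omega> s * \<bar>(1 / real n) * (\<Sum>l<n. T s l)\<bar> \<le> \<omega> s * ((1 / real n) * (\<Sum>l<n. \<bar>T s l\<bar>))"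
      using \<omega>0[OF s] by (rule mult_left_mono)
    thus "\<omega> s * \<bar>(1 / real n) * (\<Sum>l<n. T s l)\<bar> \<le> (1 / real n) * (\<Sum>l<n. \<omega> s * \<bar>T s l\<bar>)"
      by (simp add: sum_distrib_left algebra_simps)
  qed
  also have "\<dots> = (1 / real n) * (\<Sum>l<n. \<Sum>s\<in>I. \<omega> s * \<bar>T s l\<bar>)"
    by (simp add: sum_distrib_left[symmetric] sum.swap[of _ I] sum_divide_distrib)
  also have "\<dots> \<le> (1 / real n) * (\<Sum>l<n. (2 * C + M) * h l)"
    by (rule mult_left_mono, rule sum_mono) (use per n in auto)
  also have "\<dots> \<le> (2 * C + M) * Gfun f x y n \<epsilon> v th"
  proof -
    have "(1 / real n) * (\<Sum>l<n. (2 * C + M) * h l) = (2 * C + M) * ((1 / real n) * (\<Sum>l<n. h l))"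
      by (simp only: sum_distrib_left[symmetric] mult.left_commute)
    moreover have "(1 / real n) * (\<Sum>l<n. h l) \<le> Gfun f x y n \<epsilon> v th"
      unfolding Gfun_def h_def using eps E by simp
    moreover have "(2 * C + M) * ((1 / real n) * (\<Sum>l<n. h l)) \<le> (2 * C + M) * Gfun f x y n \<epsilon> v th"
      using calculation(2) C M by (intro mult_left_mono) auto
    ultimately show ?thesis by linarith
  qed
  finally show ?thesis unfolding T_def .
qed



lemma row_lemma:
  fixes g :: "'i::finite \<Rightarrow> 'a::real_normed_vector \<Rightarrow> real" and w :: "'s \<Rightarrow> 'a" and j :: 'i
  assumes p: "p > 1" and \<rho>: "\<rho> > 0" and gd: "\<And>t. (g t has_derivative g' t) (at th)"
    and gp: "\<And>t. g t th > 0" and I: "finite I" and \<omega>0: "\<And>s. s \<in> I \<Longrightarrow> \<omega> s \<ge> 0" and B: "B \<ge> 0"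
    and hyp: "\<And>t. (\<Sum>s\<in>I. \<omega> s * \<bar>g' t (w s)\<bar>) \<le> B * g t th"
  defines "F \<equiv> \<lambda>\<eta>. \<rho> * psi (hconj p) (g j \<eta>) / (\<Sum>t\<in>UNIV. \<bar>psi (hconj p) (g t \<eta>)\<bar> powr p) powr (1/p)"
  shows "(\<Sum>t\<in>UNIV. \<bar>psi (hconj p) (g t th)\<bar> powr p) powr (1/p) \<noteq> 0"
    and "F differentiable (at th)"
    and "(\<Sum>s\<in>I. \<bar>pd F th (w s)\<bar> * \<omega> s) \<le> 2 * (hconj p - 1) * B * F th"
proof -
  define q where "q = hconj p"
  have q: "q > 1" using hconj_facts[OF p] unfolding q_def by auto
  have ps: "psi q (g t th) > 0" for t using gp[of t] psi_pos[of "g t th" q] by simp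
  have ps2: "\<bar>psi q (g t th)\<bar> powr p > 0" for t using ps[of t] by simp
  have Sp: "(\<Sum>t\<in>UNIV. \<bar>psi q (g t th)\<bar> powr p) > 0"
    by (rule sum_pos) (use ps2 in auto)
  thus "(\<Sum>t\<in>UNIV. \<bar>psi (hconj p) (g t th)\<bar> powr p) powr (1/p) \<noteq> 0" unfolding q_def by simp
  have D: "(F has_derivative (\<lambda>w. F th * (q - 1) *
        (g' j w / g j th - (\<Sum>t\<in>UNIV. (g t th powr q / (\<Sum>u\<in>UNIV. g u th powr q)) * (g' t w / g t th))))) (at th)"
    unfolding F_def q_def by (rule norm_deriv[OF p gd gp])
  thus "F differentiable (at th)" unfolding differentiable_def by blast
  have Fp: "F th > 0" unfolding F_def q_def[symmetric] using Sp \<rho> gp[of j] by (simp add: psi_pos)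
  have "(\<Sum>s\<in>I. \<bar>pd F th (w s)\<bar> * \<omega> s) = (\<Sum>s\<in>I. \<bar>F th * (q - 1) *
        (g' j (w s) / g j th - (\<Sum>t\<in>UNIV. (g t th powr q / (\<Sum>u\<in>UNIV. g u th powr q)) * (g' t (w s) / g t th)))\<bar> * \<omega> s)"
    using pd_eq[OF D] by simp
  also have "\<dots> \<le> 2 * (q - 1) * B * F th"
    by (rule norm_bound[where G="\<lambda>t. g t th" and g'="\<lambda>t s. g' t (w s)"]) (use Fp q B gp I \<omega>0 hyp in auto)
  finally show "(\<Sum>s\<in>I. \<bar>pd F th (w s)\<bar> * \<omega> s) \<le> 2 * (hconj p - 1) * B * F th" unfolding q_def .
qed

definition DGfun where
  "DGfun f x y n v th w = (1 / real n) * (\<Sum>l<n. \<Sum>r\<in>UNIV.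
      cc (y l) (\<lambda>r. f r (x l) th) r * pd2 (f r (x l)) th v w
      - sm (\<lambda>r. f r (x l) th) r * (pd (f r (x l)) th w - (\<Sum>q\<in>UNIV. sm (\<lambda>r. f r (x l) th) q * pd (f q (x l)) th w))
        * pd (f r (x l)) th v)"

lemma row_full:
  fixes f :: "'k::finite \<Rightarrow> real^'d::finite \<Rightarrow> ('k,'h::finite,'d) param \<Rightarrow> real"
    and V :: "'i::finite \<Rightarrow> ('k,'h,'d) param" and w :: "'s \<Rightarrow> ('k,'h,'d) param" and j :: 'i and y :: "nat \<Rightarrow> 'k"
  assumes n: "n > 0" and eps: "\<epsilon> > 0" and S: "open S" and thS: "th \<in> S"
    and f_C2: "\<forall>r. \<forall>i<n. C2_on S (f r (x i))"
    and f_d1_nonneg: "\<forall>r. \<forall>i<n. \<forall>th\<in>S. \<forall>v\<in>Basis. pd (f r (x i)) th v \<ge> 0"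
    and f_d2_nonneg: "\<forall>r. \<forall>i<n. \<forall>th\<in>S. \<forall>v1\<in>Basis. \<forall>v2\<in>Basis. pd2 (f r (x i)) th v1 v2 \<ge> 0"
    and p: "p > 1" and \<rho>: "\<rho> > 0"
    and V: "\<And>t. V t \<in> Basis" "\<And>t. Ent (V t) = 1"
    and w: "\<And>s. s \<in> I \<Longrightarrow> w s \<in> Basis" and I: "finite I" and \<omega>0: "\<And>s. s \<in> I \<Longrightarrow> \<omega> s \<ge> 0"
    and C: "C \<ge> 0" and M: "M \<ge> 0"
    and hC: "\<And>r l. l < n \<Longrightarrow> (\<Sum>s\<in>I. \<omega> s * pd (f r (x l)) th (w s)) \<le> C"
    and hM: "\<And>r l t. l < n \<Longrightarrow> (\<Sum>s\<in>I. \<omega> s * pd2 (f r (x l)) th (w s) (V t)) \<le> M * pd (f r (x l)) th (V t)"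
  defines "Fn \<equiv> \<lambda>\<eta>. \<rho> * psi (hconj p) (pd (Phi f x y n \<epsilon>) \<eta> (V j)) /
      (\<Sum>t\<in>UNIV. \<bar>psi (hconj p) (pd (Phi f x y n \<epsilon>) \<eta> (V t))\<bar> powr p) powr (1/p)"
  shows "(\<Sum>t\<in>UNIV. \<bar>psi (hconj p) (pd (Phi f x y n \<epsilon>) th (V t))\<bar> powr p) powr (1/p) \<noteq> 0"
    and "Fn differentiable (at th)"
    and "(\<Sum>s\<in>I. \<bar>pd Fn th (w s)\<bar> * \<omega> s) \<le> 2 * (hconj p - 1) * (2 * C + M) * Fn th"
proof -
  define g where "g t \<eta> = pd (Phi f x y n \<epsilon>) \<eta> (V t)" for t \<eta>
  have geq: "g t \<eta> = Gfun f x y n \<epsilon> (V t) \<eta>" if "\<eta> \<in> S" for t \<eta>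
  proof -
    have "\<And>r l. l < n \<Longrightarrow> f r (x l) differentiable (at \<eta>)" using f_C2 that unfolding C2_on_def by blast
    from pd_eq[OF Phi_deriv[where f=f and x=x and n=n and \<eta>=\<eta>, OF this]] show ?thesis unfolding g_def Gfun_def by simp
  qed
  have gd: "(g t has_derivative DGfun f x y n (V t) th) (at th)" for t
  proof -
    have "(Gfun f x y n \<epsilon> (V t) has_derivative DGfun f x y n (V t) th) (at th)"
      unfolding DGfun_def[abs_def]
      by (rule G_deriv) (use f_C2 thS V(1) in \<open>auto simp: C2_on_def\<close>)
    thus ?thesis by (rule has_derivative_transform_within_open[OF _ S thS]) (simp add: geq)
  qed
  have gp: "g t th > 0" for t
    unfolding geq[OF thS] by (rule G_pos) (use f_d1_nonneg thS V eps in auto)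
  have hyp: "(\<Sum>s\<in>I. \<omega> s * \<bar>DGfun f x y n (V t) th (w s)\<bar>) \<le> (2 * C + M) * g t th" for t
    unfolding geq[OF thS] DGfun_def
  proof (rule G_bound[OF n eps V(2)])
    fix r l s assume l: "l < n" and s: "s \<in> I"
    show "pd (f r (x l)) th (w s) \<ge> 0" using f_d1_nonneg l s thS w by auto
    show "pd2 (f r (x l)) th (V t) (w s) \<ge> 0" using f_d2_nonneg l s thS w V by auto
  next
    fix r l assume l: "l < n"
    show "pd (f r (x l)) th (V t) \<ge> 0" using f_d1_nonneg l thS V by auto
    show "(\<Sum>s\<in>I. \<omega> s * pd (f r (x l)) th (w s)) \<le> C" using hC l by auto
    have "(\<Sum>s\<in>I. \<omega> s * pd2 (f r (x l)) th (V t) (w s)) = (\<Sum>s\<in>I. \<omega> s * pd2 (f r (x l)) th (w s) (V t))"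
      by (rule sum.cong[OF refl]) (use pd2_sym[OF S _ thS] f_C2 l V w in auto)
    thus "(\<Sum>s\<in>I. \<omega> s * pd2 (f r (x l)) th (V t) (w s)) \<le> M * pd (f r (x l)) th (V t)" using hM l by simp
  qed (use I \<omega>0 C M in auto)
  have B: "2 * C + M \<ge> 0" using C M by simp
  note R = row_lemma[OF p \<rho> gd gp I \<omega>0 B hyp]
  show "(\<Sum>t\<in>UNIV. \<bar>psi (hconj p) (pd (Phi f x y n \<epsilon>) th (V t))\<bar> powr p) powr (1/p) \<noteq> 0"
    using R(1) unfolding g_def .
  show "Fn differentiable (at th)" using R(2)[where j=j] unfolding g_def Fn_def .
  show "(\<Sum>s\<in>I. \<bar>pd Fn th (w s)\<bar> * \<omega> s) \<le> 2 * (hconj p - 1) * (2 * C + M) * Fn th"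
    using R(3)[where j=j] unfolding g_def Fn_def by (simp add: mult.assoc)
qed


lemma sum_pair: "(\<Sum>a\<in>UNIV. \<Sum>b\<in>UNIV. h a b) = (\<Sum>t\<in>(UNIV::('a::finite \<times> 'b::finite) set). h (fst t) (snd t))"
  by (simp add: sum.cartesian_product case_prod_beta)
theorem mainTheorem10:
  fixes f :: "'k::finite \<Rightarrow> real^'d::finite \<Rightarrow> ('k,'h::finite,'d) param \<Rightarrow> real"
    and x :: "nat \<Rightarrow> real^'d" and y :: "nat \<Rightarrow> 'k" and n :: nat
    and \<epsilon> pw pu \<rho>w \<rho>u Cw Cu Mww Mwu Muw Muu :: real
    and S :: "('k,'h,'d) param set"
  assumes n_pos: "n > 0"
    and x_nonneg: "\<forall>i<n. \<forall>b. x i $ b \<ge> 0"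
    and eps_pos: "\<epsilon> > 0"
    and pw: "pw > 1" and pu: "pu > 1" and rhow: "\<rho>w > 0" and rhou: "\<rho>u > 0"
    and consts_pos: "Cw > 0" "Cu > 0" "Mww > 0" "Mwu > 0" "Muw > 0" "Muu > 0"
    and S_open: "open S" and S_nbhd: "Bpp pw pu \<rho>w \<rho>u \<subseteq> S"
    and f_C2: "\<forall>r. \<forall>i<n. C2_on S (f r (x i))"
    and f_d1_nonneg: "\<forall>r. \<forall>i<n. \<forall>th\<in>S. \<forall>v\<in>Basis. pd (f r (x i)) th v \<ge> 0"
    and f_d2_nonneg: "\<forall>r. \<forall>i<n. \<forall>th\<in>S. \<forall>v1\<in>Basis. \<forall>v2\<in>Basis. pd2 (f r (x i)) th v1 v2 \<ge> 0"
    and bound_Cw: "\<forall>i<n. \<forall>th\<in>Bpp pw pu \<rho>w \<rho>u. \<forall>r s.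
        (\<Sum>t\<in>UNIV. fst th $ s $ t * pd (f r (x i)) th (dirW s t)) \<le> Cw"
    and bound_Cu: "\<forall>i<n. \<forall>th\<in>Bpp pw pu \<rho>w \<rho>u. \<forall>r.
        (\<Sum>a\<in>UNIV. \<Sum>b\<in>UNIV. snd th $ a $ b * pd (f r (x i)) th (dirU a b)) \<le> Cu"
    and bound_Mww: "\<forall>i<n. \<forall>th\<in>Bpp pw pu \<rho>w \<rho>u. \<forall>r s q b'.
        (\<Sum>t\<in>UNIV. fst th $ s $ t * pd2 (f r (x i)) th (dirW s t) (dirW q b'))
          \<le> Mww * pd (f r (x i)) th (dirW q b')"
    and bound_Mwu: "\<forall>i<n. \<forall>th\<in>Bpp pw pu \<rho>w \<rho>u. \<forall>r q b'.
        (\<Sum>a\<in>UNIV. \<Sum>b\<in>UNIV. snd th $ a $ b * pd2 (f r (x i)) th (dirU a b) (dirW q b'))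
          \<le> Mwu * pd (f r (x i)) th (dirW q b')"
    and bound_Muw: "\<forall>i<n. \<forall>th\<in>Bpp pw pu \<rho>w \<rho>u. \<forall>r s a' b''.
        (\<Sum>t\<in>UNIV. fst th $ s $ t * pd2 (f r (x i)) th (dirW s t) (dirU a' b''))
          \<le> Muw * pd (f r (x i)) th (dirU a' b'')"
    and bound_Muu: "\<forall>i<n. \<forall>th\<in>Bpp pw pu \<rho>w \<rho>u. \<forall>r a' b''.
        (\<Sum>a\<in>UNIV. \<Sum>b\<in>UNIV. snd th $ a $ b * pd2 (f r (x i)) th (dirU a b) (dirU a' b''))
          \<le> Muu * pd (f r (x i)) th (dirU a' b'')"
  shows "\<forall>th\<in>Bpp pw pu \<rho>w \<rho>u.
     (\<forall>i. denomW pw (Phi f x y n \<epsilon>) i th \<noteq> 0) \<and> denomU pu (Phi f x y n \<epsilon>) th \<noteq> 0 \<and>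
     (\<forall>i j. GW pw \<rho>w (Phi f x y n \<epsilon>) i j differentiable (at th)) \<and>
     (\<forall>a b. GU pu \<rho>u (Phi f x y n \<epsilon>) a b differentiable (at th)) \<and>
     (\<forall>i k j. (\<Sum>t\<in>UNIV. \<bar>pd (GW pw \<rho>w (Phi f x y n \<epsilon>) i j) th (dirW k t)\<bar> * fst th $ k $ t)
        \<le> Amat pw pu Cw Cu Mww Mwu Muw Muu (Some i) (Some k) * GW pw \<rho>w (Phi f x y n \<epsilon>) i j th) \<and>
     (\<forall>i j. (\<Sum>a\<in>UNIV. \<Sum>b\<in>UNIV. \<bar>pd (GW pw \<rho>w (Phi f x y n \<epsilon>) i j) th (dirU a b)\<bar> * snd th $ a $ b)
        \<le> Amat pw pu Cw Cu Mww Mwu Muw Muu (Some i) None * GW pw \<rho>w (Phi f x y n \<epsilon>) i j th) \<and>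
     (\<forall>k a b. (\<Sum>t\<in>UNIV. \<bar>pd (GU pu \<rho>u (Phi f x y n \<epsilon>) a b) th (dirW k t)\<bar> * fst th $ k $ t)
        \<le> Amat pw pu Cw Cu Mww Mwu Muw Muu None (Some k) * GU pu \<rho>u (Phi f x y n \<epsilon>) a b th) \<and>
     (\<forall>a b. (\<Sum>a2\<in>UNIV. \<Sum>b2\<in>UNIV. \<bar>pd (GU pu \<rho>u (Phi f x y n \<epsilon>) a b) th (dirU a2 b2)\<bar> * snd th $ a2 $ b2)
        \<le> Amat pw pu Cw Cu Mww Mwu Muw Muu None None * GU pu \<rho>u (Phi f x y n \<epsilon>) a b th)"
proof (intro ballI)
  fix th :: "('k,'h,'d) param" assume thB: "th \<in> Bpp pw pu \<rho>w \<rho>u"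
  have thS: "th \<in> S" using thB S_nbhd by blast
  have posW: "\<And>r l. fst th $ r $ l > 0" and posU: "\<And>a b. snd th $ a $ b > 0"
    using thB unfolding Bpp_def by auto
  have Cw0: "Cw \<ge> 0" "Cu \<ge> 0" "Mww \<ge> 0" "Mwu \<ge> 0" "Muw \<ge> 0" "Muu \<ge> 0" using consts_pos by auto
  define \<Phi> where "\<Phi> = Phi f x y n \<epsilon>"
  have wW: "\<And>(k::'k) (s::'h). s \<in> UNIV \<Longrightarrow> (dirW k s :: ('k,'h,'d) param) \<in> Basis" by (rule dirW_Basis)
  have wU: "\<And>s::'h\<times>'d. s \<in> UNIV \<Longrightarrow> (dirU (fst s) (snd s) :: ('k,'h,'d) param) \<in> Basis" by (rule dirU_Basis)
  have VW: "\<And>(i::'k) (t::'h). (dirW i t :: ('k,'h,'d) param) \<in> Basis" "\<And>(i::'k) (t::'h). Ent (dirW i t :: ('k,'h,'d) param) = 1"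
    by (rule dirW_Basis, rule Ent_dirW)
  have VU: "\<And>t::'h\<times>'d. (dirU (fst t) (snd t) :: ('k,'h,'d) param) \<in> Basis" "\<And>t::'h\<times>'d. Ent (dirU (fst t) (snd t) :: ('k,'h,'d) param) = 1"
    by (rule dirU_Basis, rule Ent_dirU)
  have oW: "\<And>(k::'k) (s::'h). s \<in> UNIV \<Longrightarrow> fst th $ k $ s \<ge> 0" using posW less_imp_le by blast
  have oU: "\<And>s::'h\<times>'d. s \<in> UNIV \<Longrightarrow> snd th $ fst s $ snd s \<ge> 0" using posU less_imp_le by blast
  have hCW: "\<And>(k::'k) r l. l < n \<Longrightarrow> (\<Sum>s\<in>UNIV. fst th $ k $ s * pd (f r (x l)) th (dirW k s)) \<le> Cw"
    using bound_Cw thB by blast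
  have hCU: "\<And>r l. l < n \<Longrightarrow> (\<Sum>s\<in>UNIV. snd th $ fst s $ snd s * pd (f r (x l)) th (dirU (fst s) (snd s))) \<le> Cu"
    using bound_Cu thB by (simp add: sum_pair)
  have hMWW: "\<And>(i::'k) (k::'k) r l t. l < n \<Longrightarrow> (\<Sum>s\<in>UNIV. fst th $ k $ s * pd2 (f r (x l)) th (dirW k s) (dirW i t))
      \<le> Mww * pd (f r (x l)) th (dirW i t)"
    using bound_Mww thB by blast
  have hMWU: "\<And>(i::'k) r l t. l < n \<Longrightarrow> (\<Sum>s\<in>UNIV. snd th $ fst s $ snd s * pd2 (f r (x l)) th (dirU (fst s) (snd s)) (dirW i t))
      \<le> Mwu * pd (f r (x l)) th (dirW i t)"
    using bound_Mwu thB by (simp add: sum_pair)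
  have hMUW: "\<And>(k::'k) r l t. l < n \<Longrightarrow> (\<Sum>s\<in>UNIV. fst th $ k $ s * pd2 (f r (x l)) th (dirW k s) (dirU (fst t) (snd t)))
      \<le> Muw * pd (f r (x l)) th (dirU (fst t) (snd t))"
    using bound_Muw thB by blast
  have hMUU: "\<And>r l t. l < n \<Longrightarrow> (\<Sum>s\<in>UNIV. snd th $ fst s $ snd s * pd2 (f r (x l)) th (dirU (fst s) (snd s)) (dirU (fst t) (snd t)))
      \<le> Muu * pd (f r (x l)) th (dirU (fst t) (snd t))"
    using bound_Muu thB by (simp add: sum_pair)
  have finW: "finite (UNIV::'h set)" and finU: "finite (UNIV::('h\<times>'d) set)" by auto
  note common = n_pos eps_pos S_open thS f_C2 f_d1_nonneg f_d2_nonneg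
  have eqGW: "GW pw \<rho>w \<Phi> i j = (\<lambda>\<eta>. \<rho>w * psi (hconj pw) (pd \<Phi> \<eta> (dirW i j)) /
      (\<Sum>t\<in>UNIV. \<bar>psi (hconj pw) (pd \<Phi> \<eta> (dirW i t))\<bar> powr pw) powr (1/pw))" for i j
    by (simp add: fun_eq_iff GW_def denomW_def pnorm_row_def)
  have eqDW: "denomW pw \<Phi> i th = (\<Sum>t\<in>UNIV. \<bar>psi (hconj pw) (pd \<Phi> th (dirW i t))\<bar> powr pw) powr (1/pw)" for i
    by (simp add: denomW_def pnorm_row_def)
  have eqGU: "GU pu \<rho>u \<Phi> a b = (\<lambda>\<eta>. \<rho>u * psi (hconj pu) (pd \<Phi> \<eta> (dirU (fst (a,b)) (snd (a,b)))) /
      (\<Sum>t\<in>UNIV. \<bar>psi (hconj pu) (pd \<Phi> \<eta> (dirU (fst t) (snd t)))\<bar> powr pu) powr (1/pu))" for a b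
    by (simp add: fun_eq_iff GU_def denomU_def pnorm_mat_def sum_pair)
  have eqDU: "denomU pu \<Phi> th = (\<Sum>t\<in>UNIV. \<bar>psi (hconj pu) (pd \<Phi> th (dirU (fst t) (snd t)))\<bar> powr pu) powr (1/pu)"
    by (simp add: denomU_def pnorm_mat_def sum_pair)
  show "(\<forall>i. denomW pw (Phi f x y n \<epsilon>) i th \<noteq> 0) \<and> denomU pu (Phi f x y n \<epsilon>) th \<noteq> 0 \<and>
     (\<forall>i j. GW pw \<rho>w (Phi f x y n \<epsilon>) i j differentiable (at th)) \<and>
     (\<forall>a b. GU pu \<rho>u (Phi f x y n \<epsilon>) a b differentiable (at th)) \<and>
     (\<forall>i k j. (\<Sum>t\<in>UNIV. \<bar>pd (GW pw \<rho>w (Phi f x y n \<epsilon>) i j) th (dirW k t)\<bar> * fst th $ k $ t)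
        \<le> Amat pw pu Cw Cu Mww Mwu Muw Muu (Some i) (Some k) * GW pw \<rho>w (Phi f x y n \<epsilon>) i j th) \<and>
     (\<forall>i j. (\<Sum>a\<in>UNIV. \<Sum>b\<in>UNIV. \<bar>pd (GW pw \<rho>w (Phi f x y n \<epsilon>) i j) th (dirU a b)\<bar> * snd th $ a $ b)
        \<le> Amat pw pu Cw Cu Mww Mwu Muw Muu (Some i) None * GW pw \<rho>w (Phi f x y n \<epsilon>) i j th) \<and>
     (\<forall>k a b. (\<Sum>t\<in>UNIV. \<bar>pd (GU pu \<rho>u (Phi f x y n \<epsilon>) a b) th (dirW k t)\<bar> * fst th $ k $ t)
        \<le> Amat pw pu Cw Cu Mww Mwu Muw Muu None (Some k) * GU pu \<rho>u (Phi f x y n \<epsilon>) a b th) \<and>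
     (\<forall>a b. (\<Sum>a2\<in>UNIV. \<Sum>b2\<in>UNIV. \<bar>pd (GU pu \<rho>u (Phi f x y n \<epsilon>) a b) th (dirU a2 b2)\<bar> * snd th $ a2 $ b2)
        \<le> Amat pw pu Cw Cu Mww Mwu Muw Muu None None * GU pu \<rho>u (Phi f x y n \<epsilon>) a b th)"
    unfolding \<Phi>_def[symmetric]
  proof (intro conjI allI)
    fix i show "denomW pw \<Phi> i th \<noteq> 0" using row_full(1)[where y=y, OF common pw rhow VW(1)[where i=i] VW(2)[where i=i] wW[where k=i] finW oW[where k=i] Cw0(1) Cw0(3) hCW[where k=i] hMWW[where i=i and k=i], folded \<Phi>_def] eqDW by simp
  next
    show "denomU pu \<Phi> th \<noteq> 0" using row_full(1)[where y=y, OF common pu rhou VU wU finU oU Cw0(2) Cw0(6) hCU hMUU, folded \<Phi>_def] eqDU by simp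
  next
    fix i j show "GW pw \<rho>w \<Phi> i j differentiable (at th)" using row_full(2)[where y=y and j=j, OF common pw rhow VW(1)[where i=i] VW(2)[where i=i] wW[where k=i] finW oW[where k=i] Cw0(1) Cw0(3) hCW[where k=i] hMWW[where i=i and k=i], folded \<Phi>_def] unfolding eqGW .
  next
    fix a b show "GU pu \<rho>u \<Phi> a b differentiable (at th)" using row_full(2)[where y=y and j="(a,b)" and V="\<lambda>t. dirU (fst t) (snd t)", OF common pu rhou VU wU finU oU Cw0(2) Cw0(6) hCU hMUU, folded \<Phi>_def] unfolding eqGU .
  next
    fix i k j show "(\<Sum>t\<in>UNIV. \<bar>pd (GW pw \<rho>w \<Phi> i j) th (dirW k t)\<bar> * fst th $ k $ t)
        \<le> Amat pw pu Cw Cu Mww Mwu Muw Muu (Some i) (Some k) * GW pw \<rho>w \<Phi> i j th"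
      using row_full(3)[where y=y and j=j, OF common pw rhow VW(1)[where i=i] VW(2)[where i=i] wW[where k=k] finW oW[where k=k] Cw0(1) Cw0(3) hCW[where k=k] hMWW[where i=i and k=k], folded \<Phi>_def] unfolding eqGW by (simp add: Amat_def)
  next
    fix i j show "(\<Sum>a\<in>UNIV. \<Sum>b\<in>UNIV. \<bar>pd (GW pw \<rho>w \<Phi> i j) th (dirU a b)\<bar> * snd th $ a $ b)
        \<le> Amat pw pu Cw Cu Mww Mwu Muw Muu (Some i) None * GW pw \<rho>w \<Phi> i j th"
      using row_full(3)[where y=y and j=j, OF common pw rhow VW(1)[where i=i] VW(2)[where i=i] wU finU oU Cw0(2) Cw0(4) hCU hMWU[where i=i], folded \<Phi>_def] unfolding eqGW by (simp add: Amat_def sum_pair)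
  next
    fix k a b
    have hMUWk: "\<And>r l t. l < n \<Longrightarrow> (\<Sum>s\<in>UNIV. fst th $ k $ s * pd2 (f r (x l)) th (dirW k s) (dirU (fst t) (snd t)))
      \<le> Muw * pd (f r (x l)) th (dirU (fst t) (snd t))" by (rule hMUW)
    show "(\<Sum>t\<in>UNIV. \<bar>pd (GU pu \<rho>u \<Phi> a b) th (dirW k t)\<bar> * fst th $ k $ t)
        \<le> Amat pw pu Cw Cu Mww Mwu Muw Muu None (Some k) * GU pu \<rho>u \<Phi> a b th"
      using row_full(3)[where y=y and j="(a,b)" and V="\<lambda>t. dirU (fst t) (snd t)", OF common pu rhou VU wW[where k=k] finW oW[where k=k] Cw0(1) Cw0(5) hCW[where k=k] hMUWk, folded \<Phi>_def] unfolding eqGU by (simp add: Amat_def)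
  next
    fix a b show "(\<Sum>a2\<in>UNIV. \<Sum>b2\<in>UNIV. \<bar>pd (GU pu \<rho>u \<Phi> a b) th (dirU a2 b2)\<bar> * snd th $ a2 $ b2)
        \<le> Amat pw pu Cw Cu Mww Mwu Muw Muu None None * GU pu \<rho>u \<Phi> a b th"
      using row_full(3)[where y=y and j="(a,b)" and V="\<lambda>t. dirU (fst t) (snd t)", OF common pu rhou VU wU finU oU Cw0(2) Cw0(6) hCU hMUU, folded \<Phi>_def] unfolding eqGU by (simp add: Amat_def sum_pair)
  qed
qed


end
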